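(* Let $\mathsf{X}\subset\mathbb{R}^p$ and $\mathsf{Y}\subset\mathbb{R}^q$, and let $\tilde s(x\mid\gamma)$ (a pdf in $x\in\mathsf{X}$ for each $\gamma\in\mathsf{Y}$) and $\tilde h(\gamma\mid x)$ (a pdf in $\gamma\in\mathsf{Y}$ for each $x\in\mathsf{X}$) be conditional densities, and define the Markov transition densities $k(x,x')=\int_{\mathsf{Y}}\tilde s(x'\mid\gamma)\tilde h(\gamma\mid x)d\gamma$ on $\mathsf{X}$ and $\tilde k(\gamma,\gamma')=\int_{\mathsf{X}}\tilde h(\gamma'\mid x)\tilde s(x\mid\gamma)dx$ on $\mathsf{Y}$. Suppose $\int_{\mathsf{X}}V(x')k(x,x')dx'\le\lambda V(x)+L$ for all $x\in\mathsf{X}$, where $V:\mathsf{X}\to[0,\infty)$, $\lambda\in[0,1)$ and $L<\infty$. Let $c$ be a constant such that $\tilde V(\gamma)=\int_{\mathsf{X}}V(x)\tilde s(x\mid\gamma)dx+c$ is finite and non-negative for all $\gamma\in\mathsf{Y}$. Then for all $\gamma\in\mathsf{Y}$, $\int_{\mathsf{Y}}\tilde V(\gamma')\tilde k(\gamma,\gamma')d\gamma'\le\lambda\tilde V(\gamma)+\tilde L$, where $\tilde L=L+c(1-\lambda)$. *)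

theory Defs
  imports "HOL-Analysis.Analysis"
begin

text \<open>Conventions: s x g stands for the conditional density s~(x|g) (x in X, g in Y),
  h g x stands for h~(g|x). Transition densities are nonnegative extended reals.\<close>

definition kX :: "('a::euclidean_space \<Rightarrow> 'b::euclidean_space \<Rightarrow> real) \<Rightarrow> ('b \<Rightarrow> 'a \<Rightarrow> real)
    \<Rightarrow> 'b set \<Rightarrow> 'a \<Rightarrow> 'a \<Rightarrow> ennreal" where
  "kX s h Y x x' = (\<integral>\<^sup>+ g\<in>Y. ennreal (s x' g) * ennreal (h g x) \<partial>lborel)"

definition kY :: "('a::euclidean_space \<Rightarrow> 'b::euclidean_space \<Rightarrow> real) \<Rightarrow> ('b \<Rightarrow> 'a \<Rightarrow> real)
    \<Rightarrow> 'a set \<Rightarrow> 'b \<Rightarrow> 'b \<Rightarrow> ennreal" where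
  "kY s h X g g' = (\<integral>\<^sup>+ x\<in>X. ennreal (h g' x) * ennreal (s x g) \<partial>lborel)"

definition Vtilde :: "('a::euclidean_space \<Rightarrow> real) \<Rightarrow> ('a \<Rightarrow> 'b \<Rightarrow> real) \<Rightarrow> 'a set \<Rightarrow> real
    \<Rightarrow> 'b \<Rightarrow> real" where
  "Vtilde V s X c g = enn2real (\<integral>\<^sup>+ x\<in>X. ennreal (V x) * ennreal (s x g) \<partial>lborel) + c"

end

theory Submission
  imports Defs
begin

lemma shift_le:
  fixes w :: "'x \<Rightarrow> ennreal" and f :: "'x \<Rightarrow> real"
  assumes fm: "f \<in> borel_measurable M" and wm: "w \<in> borel_measurable M" and A: "A \<in> sets M"
    and w1: "(\<integral>\<^sup>+x\<in>A. w x \<partial>M) = 1"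
    and f0: "\<And>x. x \<in> A \<Longrightarrow> 0 \<le> f x" and fa0: "\<And>x. x \<in> A \<Longrightarrow> 0 \<le> f x + a"
    and F0: "0 \<le> F"
    and le: "(\<integral>\<^sup>+x\<in>A. ennreal (f x) * w x \<partial>M) \<le> ennreal F"
  shows "(\<integral>\<^sup>+x\<in>A. ennreal (f x + a) * w x \<partial>M) \<le> ennreal (F + a) \<and> 0 \<le> F + a"
proof (cases "0 \<le> a")
  case True
  have "(\<integral>\<^sup>+x\<in>A. ennreal (f x + a) * w x \<partial>M)
      = (\<integral>\<^sup>+x. ennreal (f x) * w x * indicator A x + ennreal a * (w x * indicator A x) \<partial>M)"
    apply (rule nn_integral_cong)
    using f0 True by (auto split: split_indicator simp: ennreal_plus distrib_right)
  also have "\<dots> = (\<integral>\<^sup>+x\<in>A. ennreal (f x) * w x \<partial>M) + ennreal a * (\<integral>\<^sup>+x\<in>A. w x \<partial>M)"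
    using A fm wm by (simp add: nn_integral_add nn_integral_cmult)
  also have "\<dots> \<le> ennreal F + ennreal a" using le w1 by (simp add: add_mono)
  also have "\<dots> = ennreal (F + a)" using True F0 by (simp add: ennreal_plus)
  finally show ?thesis using True F0 by simp
next
  case False
  have "(\<integral>\<^sup>+x\<in>A. ennreal (f x) * w x \<partial>M)
      = (\<integral>\<^sup>+x. ennreal (f x + a) * w x * indicator A x + ennreal (-a) * (w x * indicator A x) \<partial>M)"
    apply (rule nn_integral_cong)
    using fa0 False by (auto split: split_indicator simp: ennreal_plus[symmetric] distrib_right[symmetric])
  also have "\<dots> = (\<integral>\<^sup>+x\<in>A. ennreal (f x + a) * w x \<partial>M) + ennreal (-a) * (\<integral>\<^sup>+x\<in>A. w x \<partial>M)"
    using A fm wm by (simp add: nn_integral_add nn_integral_cmult)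
  finally have eq: "(\<integral>\<^sup>+x\<in>A. ennreal (f x) * w x \<partial>M) = (\<integral>\<^sup>+x\<in>A. ennreal (f x + a) * w x \<partial>M) + ennreal (-a)"
    using w1 by simp
  with le have le2: "(\<integral>\<^sup>+x\<in>A. ennreal (f x + a) * w x \<partial>M) + ennreal (-a) \<le> ennreal F" by simp
  hence "ennreal (-a) \<le> ennreal F" by (meson add_increasing order_refl zero_le order_trans)
  hence Fa: "0 \<le> F + a" using F0 False by (simp add: ennreal_le_iff2)
  have "(\<integral>\<^sup>+x\<in>A. ennreal (f x + a) * w x \<partial>M) \<le> ennreal F - ennreal (-a)"
    using le2 by (metis ennreal_minus_mono ennreal_add_diff_cancel_right ennreal_neq_top order_refl)
  also have "\<dots> = ennreal (F + a)" using False by (subst ennreal_minus) auto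
  finally show ?thesis using Fa by simp
qed

theorem proposition2:
  fixes X :: "'a::euclidean_space set" and Y :: "'b::euclidean_space set"
    and s :: "'a \<Rightarrow> 'b \<Rightarrow> real" and h :: "'b \<Rightarrow> 'a \<Rightarrow> real"
    and V :: "'a \<Rightarrow> real" and lam L c :: real
  assumes X_meas: "X \<in> sets lborel" and Y_meas: "Y \<in> sets lborel"
    and s_meas: "(\<lambda>(x, g). s x g) \<in> borel_measurable (lborel \<Otimes>\<^sub>M lborel)"
    and h_meas: "(\<lambda>(g, x). h g x) \<in> borel_measurable (lborel \<Otimes>\<^sub>M lborel)"
    and s_nonneg: "\<And>x g. x \<in> X \<Longrightarrow> g \<in> Y \<Longrightarrow> 0 \<le> s x g"
    and s_pdf: "\<And>g. g \<in> Y \<Longrightarrow> (\<integral>\<^sup>+ x\<in>X. ennreal (s x g) \<partial>lborel) = 1"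
    and h_nonneg: "\<And>x g. x \<in> X \<Longrightarrow> g \<in> Y \<Longrightarrow> 0 \<le> h g x"
    and h_pdf: "\<And>x. x \<in> X \<Longrightarrow> (\<integral>\<^sup>+ g\<in>Y. ennreal (h g x) \<partial>lborel) = 1"
    and V_meas: "V \<in> borel_measurable lborel"
    and V_nonneg: "\<And>x. x \<in> X \<Longrightarrow> 0 \<le> V x"
    and lambda: "0 \<le> lam" "lam < 1"
    and drift: "\<And>x. x \<in> X \<Longrightarrow>
        (\<integral>\<^sup>+ x'\<in>X. ennreal (V x') * kX s h Y x x' \<partial>lborel) < \<infinity> \<and>
        enn2real (\<integral>\<^sup>+ x'\<in>X. ennreal (V x') * kX s h Y x x' \<partial>lborel) \<le> lam * V x + L"
    and Vt_finite: "\<And>g. g \<in> Y \<Longrightarrow> (\<integral>\<^sup>+ x\<in>X. ennreal (V x) * ennreal (s x g) \<partial>lborel) < \<infinity>"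
    and Vt_nonneg: "\<And>g. g \<in> Y \<Longrightarrow> 0 \<le> Vtilde V s X c g"
    and g: "g \<in> Y"
  shows "(\<integral>\<^sup>+ g'\<in>Y. ennreal (Vtilde V s X c g') * kY s h X g g' \<partial>lborel) < \<infinity> \<and>
         enn2real (\<integral>\<^sup>+ g'\<in>Y. ennreal (Vtilde V s X c g') * kY s h X g g' \<partial>lborel)
           \<le> lam * Vtilde V s X c g + (L + c * (1 - lam))"
  proof -
  have PSF: "pair_sigma_finite (lborel::'a measure) (lborel::'b measure)"
    by (simp add: pair_sigma_finite_def lborel.sigma_finite_measure_axioms)
  have sm[measurable (raw)]: "(\<lambda>w. s (f w) (k w)) \<in> borel_measurable M"
    if "f \<in> M \<rightarrow>\<^sub>M lborel" "k \<in> M \<rightarrow>\<^sub>M lborel" for f k and M :: "'z measure"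
    using measurable_compose[OF measurable_Pair[OF that] s_meas] by simp
  have hm[measurable (raw)]: "(\<lambda>w. h (f w) (k w)) \<in> borel_measurable M"
    if "f \<in> M \<rightarrow>\<^sub>M lborel" "k \<in> M \<rightarrow>\<^sub>M lborel" for f k and M :: "'z measure"
    using measurable_compose[OF measurable_Pair[OF that] h_meas] by simp
  note [measurable] = X_meas Y_meas V_meas
  define Wn where "Wn g' = (\<integral>\<^sup>+ x. ennreal (V x) * ennreal (s x g') * indicator X x \<partial>lborel)" for g'
  have Wn_m[measurable]: "Wn \<in> borel_measurable lborel"
    unfolding Wn_def by measurable
  define W where "W g' = enn2real (Wn g')" for g'
  have W_m[measurable]: "W \<in> borel_measurable lborel" unfolding W_def by measurable
  have WnW: "g' \<in> Y \<Longrightarrow> ennreal (W g') = Wn g'" for g'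
    using Vt_finite[of g'] unfolding W_def Wn_def by (simp add: less_top)
  have Vt: "Vtilde V s X c g' = W g' + c" for g'
    unfolding Vtilde_def W_def Wn_def by simp
  define D where "D x = (\<integral>\<^sup>+ x'\<in>X. ennreal (V x') * kX s h Y x x' \<partial>lborel)" for x
  have kY_m[measurable]: "(\<lambda>g'. kY s h X g g') \<in> borel_measurable lborel"
    unfolding kY_def by measurable
  have Dbound: "D x \<le> ennreal (lam * V x + L) \<and> 0 \<le> lam * V x + L" if x: "x \<in> X" for x
  proof -
    have fin: "D x < \<infinity>" and le: "enn2real (D x) \<le> lam * V x + L"
      using drift[OF x] unfolding D_def by auto
    have "D x = ennreal (enn2real (D x))" using fin by (simp add: less_top)
    also have "\<dots> \<le> ennreal (lam * V x + L)" using le by (rule ennreal_leI)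
    finally show ?thesis using le enn2real_nonneg[of "D x"] by linarith
  qed
  define F1 where "F1 g' x = Wn g' * ennreal (h g' x) * ennreal (s x g) * indicator X x * indicator Y g'" for g' x
  have F1_m[measurable]: "case_prod (\<lambda>x g'. F1 g' x) \<in> borel_measurable (lborel \<Otimes>\<^sub>M lborel)"
    unfolding F1_def by measurable
  have step1: "ennreal (W g') * kY s h X g g' * indicator Y g' = (\<integral>\<^sup>+x. F1 g' x \<partial>lborel)" for g'
  proof (cases "g' \<in> Y")
    case True
    have "(\<integral>\<^sup>+x. F1 g' x \<partial>lborel) = (\<integral>\<^sup>+x. Wn g' * (ennreal (h g' x) * ennreal (s x g) * indicator X x) \<partial>lborel)"
      unfolding F1_def using True by (simp add: mult.assoc)
    also have "\<dots> = Wn g' * kY s h X g g'"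
      unfolding kY_def by (subst nn_integral_cmult) auto
    finally show ?thesis using True WnW by simp
  qed (simp add: F1_def)
  define F2 where "F2 x x' g' = ennreal (V x') * ennreal (s x' g') * indicator X x' * ennreal (h g' x) * indicator Y g'" for x x' g'
  have F2_m[measurable]: "case_prod (\<lambda>x' g'. F2 x x' g') \<in> borel_measurable (lborel \<Otimes>\<^sub>M lborel)" for x
    unfolding F2_def by measurable
  have step3: "(\<integral>\<^sup>+g'. F1 g' x \<partial>lborel) = ennreal (s x g) * indicator X x * (\<integral>\<^sup>+g'. \<integral>\<^sup>+x'. F2 x x' g' \<partial>lborel \<partial>lborel)" for x
  proof -
    have "(\<integral>\<^sup>+g'. F1 g' x \<partial>lborel) = (\<integral>\<^sup>+g'. (ennreal (s x g) * indicator X x) * (Wn g' * ennreal (h g' x) * indicator Y g') \<partial>lborel)"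
      unfolding F1_def by (simp add: mult_ac)
    also have "\<dots> = ennreal (s x g) * indicator X x * (\<integral>\<^sup>+g'. Wn g' * ennreal (h g' x) * indicator Y g' \<partial>lborel)"
      by (subst nn_integral_cmult) auto
    also have "(\<integral>\<^sup>+g'. Wn g' * ennreal (h g' x) * indicator Y g' \<partial>lborel) = (\<integral>\<^sup>+g'. \<integral>\<^sup>+x'. F2 x x' g' \<partial>lborel \<partial>lborel)"
    proof (rule nn_integral_cong)
      fix g' :: 'b
      have "Wn g' * ennreal (h g' x) * indicator Y g' = Wn g' * (ennreal (h g' x) * indicator Y g')" by (simp add: mult.assoc)
      also have "\<dots> = (\<integral>\<^sup>+x'. ennreal (V x') * ennreal (s x' g') * indicator X x' * (ennreal (h g' x) * indicator Y g') \<partial>lborel)"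
        unfolding Wn_def by (subst nn_integral_multc) auto
      also have "\<dots> = (\<integral>\<^sup>+x'. F2 x x' g' \<partial>lborel)" unfolding F2_def by (simp add: mult.assoc)
      finally show "Wn g' * ennreal (h g' x) * indicator Y g' = (\<integral>\<^sup>+x'. F2 x x' g' \<partial>lborel)" .
    qed
    finally show ?thesis .
  qed
  have step5: "(\<integral>\<^sup>+g'. \<integral>\<^sup>+x'. F2 x x' g' \<partial>lborel \<partial>lborel) = D x" for x
  proof -
    have "(\<integral>\<^sup>+g'. \<integral>\<^sup>+x'. F2 x x' g' \<partial>lborel \<partial>lborel) = (\<integral>\<^sup>+x'. \<integral>\<^sup>+g'. F2 x x' g' \<partial>lborel \<partial>lborel)"
      by (rule pair_sigma_finite.Fubini'[OF PSF F2_m])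
    also have "\<dots> = D x"
      unfolding D_def
    proof (rule nn_integral_cong)
      fix x' :: 'a
      have "(\<integral>\<^sup>+g'. F2 x x' g' \<partial>lborel) = (\<integral>\<^sup>+g'. (ennreal (V x') * indicator X x') * (ennreal (s x' g') * ennreal (h g' x) * indicator Y g') \<partial>lborel)"
        unfolding F2_def by (simp add: mult_ac)
      also have "\<dots> = ennreal (V x') * indicator X x' * kX s h Y x x'"
        unfolding kX_def by (subst nn_integral_cmult) auto
      finally show "(\<integral>\<^sup>+g'. F2 x x' g' \<partial>lborel) = ennreal (V x') * kX s h Y x x' * indicator X x'"
        by (simp add: mult_ac)
    qed
    finally show ?thesis .
  qed
  have IW: "(\<integral>\<^sup>+g'. ennreal (W g') * kY s h X g g' * indicator Y g' \<partial>lborel) = (\<integral>\<^sup>+x. ennreal (s x g) * indicator X x * D x \<partial>lborel)"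
  proof -
    have "(\<integral>\<^sup>+g'. ennreal (W g') * kY s h X g g' * indicator Y g' \<partial>lborel) = (\<integral>\<^sup>+g'. \<integral>\<^sup>+x. F1 g' x \<partial>lborel \<partial>lborel)"
      by (simp add: step1)
    also have "\<dots> = (\<integral>\<^sup>+x. \<integral>\<^sup>+g'. F1 g' x \<partial>lborel \<partial>lborel)"
      by (rule pair_sigma_finite.Fubini'[OF PSF F1_m])
    also have "\<dots> = (\<integral>\<^sup>+x. ennreal (s x g) * indicator X x * D x \<partial>lborel)"
      by (simp add: step3 step5)
    finally show ?thesis .
  qed
  also have "\<dots> \<le> (\<integral>\<^sup>+x. ennreal (lam * V x + L) * ennreal (s x g) * indicator X x \<partial>lborel)"
    by (rule nn_integral_mono) (auto split: split_indicator simp: mult.commute[of _ "ennreal (s _ g)"] intro!: mult_left_mono Dbound[THEN conjunct1])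
  finally have IW_le: "(\<integral>\<^sup>+g'. ennreal (W g') * kY s h X g g' * indicator Y g' \<partial>lborel)
     \<le> (\<integral>\<^sup>+x. ennreal (lam * V x + L) * ennreal (s x g) * indicator X x \<partial>lborel)" .
  have W0: "0 \<le> W g'" for g' unfolding W_def by simp
  have lamV: "(\<integral>\<^sup>+x\<in>X. ennreal (lam * V x) * ennreal (s x g) \<partial>lborel) \<le> ennreal (lam * W g)"
  proof -
    have "(\<integral>\<^sup>+x\<in>X. ennreal (lam * V x) * ennreal (s x g) \<partial>lborel)
        = (\<integral>\<^sup>+x. ennreal lam * (ennreal (V x) * ennreal (s x g) * indicator X x) \<partial>lborel)"
      by (rule nn_integral_cong) (auto split: split_indicator simp: ennreal_mult lambda V_nonneg mult_ac)
    also have "\<dots> = ennreal lam * Wn g" unfolding Wn_def by (subst nn_integral_cmult) auto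
    also have "\<dots> = ennreal (lam * W g)" using WnW[OF g] lambda W0[of g] by (simp add: ennreal_mult')
    finally show ?thesis by simp
  qed
  have A1: "(\<integral>\<^sup>+x\<in>X. ennreal (lam * V x + L) * ennreal (s x g) \<partial>lborel) \<le> ennreal (lam * W g + L) \<and> 0 \<le> lam * W g + L"
  proof (rule shift_le[of "\<lambda>x. lam * V x" lborel "\<lambda>x. ennreal (s x g)" X L "lam * W g", OF _ _ X_meas s_pdf[OF g]])
    show "(\<lambda>x. lam * V x) \<in> borel_measurable lborel" by measurable
    show "(\<lambda>x. ennreal (s x g)) \<in> borel_measurable lborel" by measurable
    show "0 \<le> lam * V x" if "x \<in> X" for x using that lambda V_nonneg by simp
    show "0 \<le> lam * V x + L" if "x \<in> X" for x using that Dbound by blast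
    show "0 \<le> lam * W g" using lambda W0[of g] by simp
    show "(\<integral>\<^sup>+x\<in>X. ennreal (lam * V x) * ennreal (s x g) \<partial>lborel) \<le> ennreal (lam * W g)" by (rule lamV)
  qed
  have kY1: "(\<integral>\<^sup>+g'\<in>Y. kY s h X g g' \<partial>lborel) = 1"
  proof -
    define F3 where "F3 g' x = ennreal (h g' x) * ennreal (s x g) * indicator X x * indicator Y g'" for g' x
    have F3_m[measurable]: "case_prod (\<lambda>x g'. F3 g' x) \<in> borel_measurable (lborel \<Otimes>\<^sub>M lborel)"
      unfolding F3_def by measurable
    have "(\<integral>\<^sup>+g'\<in>Y. kY s h X g g' \<partial>lborel) = (\<integral>\<^sup>+g'. \<integral>\<^sup>+x. F3 g' x \<partial>lborel \<partial>lborel)"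
      unfolding kY_def F3_def by (subst nn_integral_multc[symmetric]) auto
    also have "\<dots> = (\<integral>\<^sup>+x. \<integral>\<^sup>+g'. F3 g' x \<partial>lborel \<partial>lborel)"
      by (rule pair_sigma_finite.Fubini'[OF PSF F3_m])
    also have "\<dots> = (\<integral>\<^sup>+x. ennreal (s x g) * indicator X x \<partial>lborel)"
    proof (rule nn_integral_cong)
      fix x :: 'a
      have "(\<integral>\<^sup>+g'. F3 g' x \<partial>lborel) = (\<integral>\<^sup>+g'. (ennreal (s x g) * indicator X x) * (ennreal (h g' x) * indicator Y g') \<partial>lborel)"
        unfolding F3_def by (simp add: mult_ac)
      also have "\<dots> = ennreal (s x g) * indicator X x * (\<integral>\<^sup>+g'\<in>Y. ennreal (h g' x) \<partial>lborel)"
        by (subst nn_integral_cmult) auto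
      also have "\<dots> = ennreal (s x g) * indicator X x"
        by (cases "x \<in> X") (auto simp: h_pdf)
      finally show "(\<integral>\<^sup>+g'. F3 g' x \<partial>lborel) = ennreal (s x g) * indicator X x" .
    qed
    also have "\<dots> = 1" using s_pdf[OF g] by simp
    finally show ?thesis .
  qed
  have A2: "(\<integral>\<^sup>+g'\<in>Y. ennreal (W g' + c) * kY s h X g g' \<partial>lborel) \<le> ennreal (lam * W g + L + c) \<and> 0 \<le> lam * W g + L + c"
  proof (rule shift_le[of W lborel "\<lambda>g'. kY s h X g g'" Y c "lam * W g + L", OF W_m kY_m Y_meas kY1])
    show "0 \<le> W g'" if "g' \<in> Y" for g' by (rule W0)
    show "0 \<le> W g' + c" if "g' \<in> Y" for g' using Vt_nonneg[OF that] by (simp add: Vt)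
    show "0 \<le> lam * W g + L" using A1 by blast
    show "(\<integral>\<^sup>+g'\<in>Y. ennreal (W g') * kY s h X g g' \<partial>lborel) \<le> ennreal (lam * W g + L)"
      using order.trans[OF IW_le conjunct1[OF A1]] by simp
  qed
  have eqI: "(\<integral>\<^sup>+ g'\<in>Y. ennreal (Vtilde V s X c g') * kY s h X g g' \<partial>lborel) = (\<integral>\<^sup>+g'\<in>Y. ennreal (W g' + c) * kY s h X g g' \<partial>lborel)"
    by (simp add: Vt)
  have "lam * W g + L + c = lam * Vtilde V s X c g + (L + c * (1 - lam))"
    by (simp add: Vt algebra_simps)
  moreover
  let ?I = "(\<integral>\<^sup>+g'\<in>Y. ennreal (W g' + c) * kY s h X g g' \<partial>lborel)"
  have "?I < \<infinity>" using A2 ennreal_less_top[of "lam * W g + L + c"] unfolding infinity_ennreal_def by (meson le_less_trans conjunct1)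
  moreover have "enn2real ?I \<le> lam * W g + L + c"
  proof -
    have "enn2real ?I \<le> enn2real (ennreal (lam * W g + L + c))"
      using A2 by (intro enn2real_mono) (auto simp: top_unique)
    then show ?thesis using A2 by simp
  qed
  ultimately show ?thesis unfolding eqI by simp
qed

end
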